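(* Every one-input one-output tAND net is sub-sound.
   Context: Petri nets and markings. A Petri net is a triple $(P,T,F)$ with $P$ a finite set of places, $T$ a finite set of transitions, $P\cap T=\emptyset$, and $F\subseteq (P\times T)\cup(T\times P)$. For a node $x$, $\bullet x=\{y\mid (y,x)\in F\}$, $x\bullet=\{y\mid (x,y)\in F\}$. A marking is a multiset over $P$ (a function $P\to\mathbb N$); sets of places are identified with bags of multiplicity one, $+,-,\le$ are pointwise, and $k.m$ is the sum of $k$ copies of $m$. Transition $t$ is enabled at $m$ iff $\bullet t\le m$, firing gives $m-\bullet t+t\bullet$, and $m\xrightarrow{*}m'$ denotes reachability by a finite (possibly empty) firing sequence. Workflow nets. A pWF net is $(P,T,F,I,O)$ with $(P,T,F)$ a Petri net, $I,O\subseteq P$ non-empty, every node reachable by a directed path from some node of $I$, and some node of $O$ reachable from every node. A tWF net is the same with $I,O$ non-empty subsets of $T$. Input nodes may have incoming edges and output nodes outgoing edges. A WF net is one-input one-output if $|I|=|O|=1$. The place-completion $\mathrm{pc}(N)$ of a tWF net $N=(P,T,F,I,O)$ is obtained by adding two fresh places $p_i,p_o$ with edges $(p_i,t)$ for all $t\in I$ and $(t,p_o)$ for all $t\in O$, and taking input set $\{p_i\}$ and output set $\{p_o\}$. AND nets. An AND net is an acyclic WF net $(P,T,F,I,O)$ such that for every place $p$: (1) either $p\in I$ and $|\bullet p|=0$, or $p\notin I$ and $|\bullet p|=1$; and (2) either $p\in O$ and $|p\bullet|=0$, or $p\notin O$ and $|p\bullet|=1$. A tAND net is an AND net that is a tWF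 net. Sub-soundness. A pWF net is sub-sound if for all integers $k\ge k'\ge 0$ and every marking $m'$: if $k.I\xrightarrow{*}m'+k'.O$ then $m'\xrightarrow{*}(k-k').O$. A tWF net is sub-sound iff its place-completion is. *)

theory Defs
  imports Main "HOL-Library.Multiset"
begin

definition preset :: "('a \<times> 'a) set \<Rightarrow> 'a \<Rightarrow> 'a set" where
  "preset F x = {y. (y, x) \<in> F}"

definition postset :: "('a \<times> 'a) set \<Rightarrow> 'a \<Rightarrow> 'a set" where
  "postset F x = {y. (x, y) \<in> F}"

definition petri_net :: "'a set \<Rightarrow> 'a set \<Rightarrow> ('a \<times> 'a) set \<Rightarrow> bool" where
  "petri_net P T F \<longleftrightarrow> finite P \<and> finite T \<and> P \<inter> T = {} \<and> F \<subseteq> (P \<times> T) \<union> (T \<times> P)"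

definition fire :: "'a set \<Rightarrow> ('a \<times> 'a) set \<Rightarrow> 'a multiset \<Rightarrow> 'a multiset \<Rightarrow> bool" where
  "fire T F m m' \<longleftrightarrow> (\<exists>t\<in>T. mset_set (preset F t) \<subseteq># m \<and>
       m' = m - mset_set (preset F t) + mset_set (postset F t))"

definition reach :: "'a set \<Rightarrow> ('a \<times> 'a) set \<Rightarrow> 'a multiset \<Rightarrow> 'a multiset \<Rightarrow> bool" where
  "reach T F = (fire T F)\<^sup>*\<^sup>*"

definition wf_net :: "'a set \<Rightarrow> 'a set \<Rightarrow> ('a \<times> 'a) set \<Rightarrow> 'a set \<Rightarrow> 'a set \<Rightarrow> bool" where
  "wf_net P T F I Out \<longleftrightarrow> petri_net P T F \<and> I \<noteq> {} \<and> Out \<noteq> {} \<and>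
     (\<forall>x \<in> P \<union> T. \<exists>i\<in>I. (i, x) \<in> F\<^sup>*) \<and>
     (\<forall>x \<in> P \<union> T. \<exists>q\<in>Out. (x, q) \<in> F\<^sup>*)"

definition pwf_net :: "'a set \<Rightarrow> 'a set \<Rightarrow> ('a \<times> 'a) set \<Rightarrow> 'a set \<Rightarrow> 'a set \<Rightarrow> bool" where
  "pwf_net P T F I Out \<longleftrightarrow> wf_net P T F I Out \<and> I \<subseteq> P \<and> Out \<subseteq> P"

definition twf_net :: "'a set \<Rightarrow> 'a set \<Rightarrow> ('a \<times> 'a) set \<Rightarrow> 'a set \<Rightarrow> 'a set \<Rightarrow> bool" where
  "twf_net P T F I Out \<longleftrightarrow> wf_net P T F I Out \<and> I \<subseteq> T \<and> Out \<subseteq> T"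

definition and_net :: "'a set \<Rightarrow> 'a set \<Rightarrow> ('a \<times> 'a) set \<Rightarrow> 'a set \<Rightarrow> 'a set \<Rightarrow> bool" where
  "and_net P T F I Out \<longleftrightarrow> (pwf_net P T F I Out \<or> twf_net P T F I Out) \<and> acyclic F \<and>
     (\<forall>p\<in>P. (p \<in> I \<and> card (preset F p) = 0) \<or> (p \<notin> I \<and> card (preset F p) = 1)) \<and>
     (\<forall>p\<in>P. (p \<in> Out \<and> card (postset F p) = 0) \<or> (p \<notin> Out \<and> card (postset F p) = 1))"

definition tand_net :: "'a set \<Rightarrow> 'a set \<Rightarrow> ('a \<times> 'a) set \<Rightarrow> 'a set \<Rightarrow> 'a set \<Rightarrow> bool" where
  "tand_net P T F I Out \<longleftrightarrow> and_net P T F I Out \<and> twf_net P T F I Out"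

definition sub_sound_p :: "'a set \<Rightarrow> 'a set \<Rightarrow> ('a \<times> 'a) set \<Rightarrow> 'a set \<Rightarrow> 'a set \<Rightarrow> bool" where
  "sub_sound_p P T F I Out \<longleftrightarrow>
     (\<forall>k k' :: nat. \<forall>m'. k' \<le> k \<longrightarrow>
        reach T F (repeat_mset k (mset_set I)) (m' + repeat_mset k' (mset_set Out)) \<longrightarrow>
        reach T F m' (repeat_mset (k - k') (mset_set Out)))"

text \<open>Node type of the place-completion: old nodes plus two fresh places.\<close>
datatype 'a cnode = Old 'a | PIn | POut

definition pc_P :: "'a set \<Rightarrow> 'a cnode set" where
  "pc_P P = Old ` P \<union> {PIn, POut}"

definition pc_T :: "'a set \<Rightarrow> 'a cnode set" where
  "pc_T T = Old ` T"

definition pc_F :: "('a \<times> 'a) set \<Rightarrow> 'a set \<Rightarrow> 'a set \<Rightarrow> ('a cnode \<times> 'a cnode) set" where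
  "pc_F F I Out = map_prod Old Old ` F \<union> {(PIn, Old t) | t. t \<in> I} \<union> {(Old t, POut) | t. t \<in> Out}"

definition sub_sound_t :: "'a set \<Rightarrow> 'a set \<Rightarrow> ('a \<times> 'a) set \<Rightarrow> 'a set \<Rightarrow> 'a set \<Rightarrow> bool" where
  "sub_sound_t P T F I Out \<longleftrightarrow> sub_sound_p (pc_P P) (pc_T T) (pc_F F I Out) {PIn} {POut}"

end

theory Submission
  imports Defs
begin

locale tand1 =
  fixes P T :: "'a set" and F :: "('a \<times> 'a) set" and ii oo :: 'a
  assumes finP: "finite P" and finT: "finite T" and disj: "P \<inter> T = {}"
  and Fsub: "F \<subseteq> P \<times> T \<union> T \<times> P"
  and iiT: "ii \<in> T" and ooT: "oo \<in> T"
  and reachi: "\<forall>x\<in>T. (ii, x) \<in> F\<^sup>*"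
  and acyc: "acyclic F"
  and prod1: "\<forall>p\<in>P. \<exists>!u. (u,p) \<in> F"
  and cons1: "\<forall>p\<in>P. \<exists>!v. (p,v) \<in> F"
begin

definition prd where "prd p = (THE u. (u,p) \<in> F)"
definition csm where "csm p = (THE v. (p,v) \<in> F)"

lemma prd: "p \<in> P \<Longrightarrow> (prd p, p) \<in> F"
  unfolding prd_def by (metis prod1 theI')
lemma prd_uniq: "p \<in> P \<Longrightarrow> (u,p) \<in> F \<Longrightarrow> u = prd p"
  using prd prod1 by blast
lemma csm: "p \<in> P \<Longrightarrow> (p, csm p) \<in> F"
  unfolding csm_def by (metis cons1 theI')
lemma csm_uniq: "p \<in> P \<Longrightarrow> (p,u) \<in> F \<Longrightarrow> u = csm p"
  using csm cons1 by blast
lemma prdT: "p \<in> P \<Longrightarrow> prd p \<in> T"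
  using prd[of p] Fsub disj by blast
lemma csmT: "p \<in> P \<Longrightarrow> csm p \<in> T"
  using csm[of p] Fsub disj by blast

lemma finF: "finite F"
  using Fsub finP finT by (meson finite_SigmaI finite_UnI rev_finite_subset)

lemma preP: "t \<in> T \<Longrightarrow> preset F t \<subseteq> P"
  unfolding preset_def using Fsub disj by blast
lemma postP: "t \<in> T \<Longrightarrow> postset F t \<subseteq> P"
  unfolding postset_def using Fsub disj by blast

lemma pre_eq: "t \<in> T \<Longrightarrow> preset (pc_F F {ii} {oo}) (Old t)
   = Old ` preset F t \<union> (if t = ii then {PIn} else {})"
  unfolding preset_def pc_F_def by auto

lemma post_eq: "t \<in> T \<Longrightarrow> postset (pc_F F {ii} {oo}) (Old t)
   = Old ` postset F t \<union> (if t = oo then {POut} else {})"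
  unfolding postset_def pc_F_def by auto

definition Inv :: "nat \<Rightarrow> nat \<Rightarrow> 'a cnode multiset \<Rightarrow> ('a \<Rightarrow> nat) \<Rightarrow> bool" where
  "Inv k c m n \<longleftrightarrow> (\<forall>t\<in>T. n t \<le> k) \<and> count m PIn + n ii = k \<and> count m POut + c = n oo
    \<and> (\<forall>p\<in>P. count m (Old p) + n (csm p) = n (prd p))
    \<and> (\<forall>x. x \<notin> pc_P P \<longrightarrow> count m x = 0)"

lemma fire_step:
  assumes inv: "Inv k c m n" and tT: "t \<in> T"
    and en: "mset_set (preset (pc_F F {ii} {oo}) (Old t)) \<subseteq># m"
  shows "Inv k c (m - mset_set (preset (pc_F F {ii} {oo}) (Old t))
                 + mset_set (postset (pc_F F {ii} {oo}) (Old t))) (n(t := Suc (n t)))"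
proof -
  define A where "A = Old ` preset F t \<union> (if t = ii then {PIn} else {})"
  define B where "B = Old ` postset F t \<union> (if t = oo then {POut} else {})"
  have finA: "finite A" unfolding A_def using preP[OF tT] finP by (simp add: finite_subset)
  have finB: "finite B" unfolding B_def using postP[OF tT] finP by (simp add: finite_subset)
  have cA: "\<And>x. count (mset_set A) x = (if x \<in> A then 1 else 0)" using finA by simp
  have cB: "\<And>x. count (mset_set B) x = (if x \<in> B then 1 else 0)" using finB by simp
  have enA: "mset_set A \<subseteq># m" using en pre_eq[OF tT] A_def by simp
  have le: "\<And>x. count (mset_set A) x \<le> count m x" using enA by (simp add: mset_subset_eq_count)
  have c2: "\<And>x. count (m - mset_set A + mset_set B) x = count m x - (if x \<in> A then 1 else 0) + (if x \<in> B then 1 else 0)"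
    using cA cB by simp
  have PA: "PIn \<in> A \<longleftrightarrow> t = ii" "PIn \<notin> B" "POut \<notin> A" "POut \<in> B \<longleftrightarrow> t = oo"
    unfolding A_def B_def by auto
  have OA: "\<And>p. p \<in> P \<Longrightarrow> Old p \<in> A \<longleftrightarrow> csm p = t"
    unfolding A_def preset_def using csm csm_uniq by auto
  have OB: "\<And>p. p \<in> P \<Longrightarrow> Old p \<in> B \<longleftrightarrow> prd p = t"
    unfolding B_def postset_def using prd prd_uniq by auto
  have nb: "\<And>p. p \<in> P \<Longrightarrow> \<not> (csm p = t \<and> prd p = t)"
  proof
    fix p assume p: "p \<in> P" and h: "csm p = t \<and> prd p = t"
    then have "(t,p) \<in> F" "(p,t) \<in> F" using prd csm by metis+
    then have "(t,t) \<in> F\<^sup>+" by auto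
    then show False using acyc unfolding acyclic_def by blast
  qed
  have sub: "A \<subseteq> pc_P P" "B \<subseteq> pc_P P"
    unfolding A_def B_def pc_P_def using preP[OF tT] postP[OF tT] by auto
  have bound: "n t < k"
  proof (cases "t = ii")
    case True
    then have "1 \<le> count m PIn" using le[of PIn] cA PA by simp
    moreover have "count m PIn + n ii = k" using inv unfolding Inv_def by blast
    ultimately have "n ii < k" by linarith
    then show ?thesis using True by simp
  next
    case False
    have "(ii, t) \<in> F\<^sup>*" using reachi tT by blast
    then obtain x where x: "(x, t) \<in> F" using False by (metis rtranclE)
    have xP: "x \<in> P" using x Fsub disj tT by blast
    have "csm x = t" using csm_uniq[OF xP x] by simp
    then have c1: "1 \<le> count m (Old x)" using le[of "Old x"] cA OA[OF xP] by simp
    have "count m (Old x) + n (csm x) = n (prd x)" using inv xP unfolding Inv_def by blast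
    then have e: "count m (Old x) + n t = n (prd x)" using \<open>csm x = t\<close> by simp
    have "n (prd x) \<le> k" using inv prdT[OF xP] unfolding Inv_def by blast
    then show ?thesis using c1 e by linarith
  qed
  have "Inv k c (m - mset_set A + mset_set B) (n(t := Suc (n t)))"
    unfolding Inv_def
  proof (intro conjI ballI allI impI)
    fix s assume "s \<in> T" then show "(n(t := Suc (n t))) s \<le> k" using bound inv unfolding Inv_def by auto
  next
    show "count (m - mset_set A + mset_set B) PIn + (n(t := Suc (n t))) ii = k"
      using c2[of PIn] PA inv le[of PIn] cA[of PIn] unfolding Inv_def by auto
  next
    show "count (m - mset_set A + mset_set B) POut + c = (n(t := Suc (n t))) oo"
      using c2[of POut] PA inv unfolding Inv_def by auto
  next
    fix p assume p: "p \<in> P"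
    have e: "count m (Old p) + n (csm p) = n (prd p)" using inv p unfolding Inv_def by blast
    show "count (m - mset_set A + mset_set B) (Old p) + (n(t := Suc (n t))) (csm p) = (n(t := Suc (n t))) (prd p)"
      using c2[of "Old p"] OA[OF p] OB[OF p] nb[OF p] e le[of "Old p"] cA[of "Old p"]
      by (auto split: if_splits)
  next
    fix x assume "x \<notin> pc_P P"
    then show "count (m - mset_set A + mset_set B) x = 0"
      using c2[of x] sub inv unfolding Inv_def by auto
  qed
  then show ?thesis using pre_eq[OF tT] post_eq[OF tT] A_def B_def by simp
qed

lemma initial: "Inv k 0 (repeat_mset k {#PIn#}) (\<lambda>_. 0)"
  unfolding Inv_def pc_P_def by auto

lemma reach_inv:
  assumes "reach (pc_T T) (pc_F F {ii} {oo}) m0 m" and "Inv k c m0 n0"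
  shows "\<exists>n. Inv k c m n"
  using assms unfolding reach_def
proof (induction rule: rtranclp_induct)
  case base then show ?case by blast
next
  case (step y z)
  then obtain n where inv: "Inv k c y n" by blast
  from step.hyps(2) obtain t' where t': "t' \<in> pc_T T"
    "mset_set (preset (pc_F F {ii} {oo}) t') \<subseteq># y"
    "z = y - mset_set (preset (pc_F F {ii} {oo}) t') + mset_set (postset (pc_F F {ii} {oo}) t')"
    unfolding fire_def by blast
  then obtain t where "t \<in> T" "t' = Old t" unfolding pc_T_def by blast
  then show ?case using fire_step[OF inv] t' by blast
qed

lemma progress:
  assumes inv: "Inv k c m n" and t0: "t0 \<in> T" "n t0 < k"
  shows "\<exists>t\<in>T. n t < k \<and> mset_set (preset (pc_F F {ii} {oo}) (Old t)) \<subseteq># m"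
proof -
  have wf: "wf (F\<^sup>+)" using finite_acyclic_wf finF acyc wf_trancl by blast
  obtain t where t: "t \<in> {t\<in>T. n t < k}" and mn: "\<And>y. (y,t) \<in> F\<^sup>+ \<Longrightarrow> y \<notin> {t\<in>T. n t < k}"
    using wfE_min[OF wf, of t0 "{t\<in>T. n t < k}"] t0 by blast
  have tT: "t \<in> T" and nt: "n t < k" using t by auto
  define A where "A = Old ` preset F t \<union> (if t = ii then {PIn} else {})"
  have finA: "finite A" unfolding A_def using preP[OF tT] finP by (simp add: finite_subset)
  have "mset_set A \<subseteq># m"
  proof (rule mset_subset_eqI)
    fix x
    show "count (mset_set A) x \<le> count m x"
    proof (cases "x \<in> A")
      case False then show ?thesis by simp
    next
      case True
      then consider "x = PIn" "t = ii" | p where "x = Old p" "(p,t) \<in> F"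
        unfolding A_def preset_def by (auto split: if_splits)
      then show ?thesis
      proof cases
        case 1
        have "count m PIn + n ii = k" using inv unfolding Inv_def by blast
        moreover have "n ii < k" using 1 nt by simp
        ultimately have "0 < count m PIn" by linarith
        then show ?thesis using 1 finA True by simp
      next
        case 2
        have pP: "p \<in> P" using 2 Fsub disj tT by blast
        have cs: "csm p = t" using csm_uniq[OF pP] 2 by simp
        have "(prd p, t) \<in> F\<^sup>+" using prd[OF pP] 2 by auto
        then have "\<not> n (prd p) < k" using mn prdT[OF pP] by blast
        moreover have "count m (Old p) + n (csm p) = n (prd p)" using inv pP unfolding Inv_def by blast
        ultimately have "count m (Old p) + n t = n (prd p)" "k \<le> n (prd p)" using cs by auto
        then have "0 < count m (Old p)" using nt by linarith
        then show ?thesis using 2 finA True by simp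
      qed
    qed
  qed
  then show ?thesis using tT nt pre_eq[OF tT] A_def by auto
qed

lemma finish:
  assumes "(\<Sum>t\<in>T. k - n t) = d" and "Inv k c m n"
  shows "\<exists>m2 n2. reach (pc_T T) (pc_F F {ii} {oo}) m m2 \<and> Inv k c m2 n2 \<and> (\<forall>t\<in>T. n2 t = k)"
  using assms
proof (induction d arbitrary: m n rule: less_induct)
  case (less d)
  show ?case
  proof (cases "\<exists>t\<in>T. n t < k")
    case False
    then have "\<forall>t\<in>T. n t = k" using less.prems unfolding Inv_def by force
    then show ?thesis using less.prems unfolding reach_def by blast
  next
    case True
    then obtain t0 where "t0 \<in> T" "n t0 < k" by blast
    then obtain t where t: "t \<in> T" "n t < k"
      and en: "mset_set (preset (pc_F F {ii} {oo}) (Old t)) \<subseteq># m"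
      using progress[OF less.prems(2)] by blast
    define m1 where "m1 = m - mset_set (preset (pc_F F {ii} {oo}) (Old t))
                 + mset_set (postset (pc_F F {ii} {oo}) (Old t))"
    define n1 where "n1 = n(t := Suc (n t))"
    have inv1: "Inv k c m1 n1" unfolding m1_def n1_def by (rule fire_step[OF less.prems(2) t(1) en])
    have f: "fire (pc_T T) (pc_F F {ii} {oo}) m m1"
      unfolding fire_def pc_T_def m1_def using t en by blast
    have lt: "(\<Sum>s\<in>T. k - n1 s) < (\<Sum>s\<in>T. k - n s)"
      by (rule sum_strict_mono_ex1) (use finT t in \<open>auto simp: n1_def\<close>)
    obtain m2 n2 where "reach (pc_T T) (pc_F F {ii} {oo}) m1 m2" "Inv k c m2 n2" "\<forall>t\<in>T. n2 t = k"
      using less.IH[OF _ refl inv1] lt less.prems(1) by blast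
    then show ?thesis using f unfolding reach_def
      by (meson converse_rtranclp_into_rtranclp)
  qed
qed

lemma final:
  assumes inv: "Inv k c m n" and all: "\<forall>t\<in>T. n t = k"
  shows "m = repeat_mset (k - c) {#POut#}"
proof (rule multiset_eqI)
  fix x
  show "count m x = count (repeat_mset (k - c) {#POut#}) x"
  proof (cases x)
    case (Old a)
    show ?thesis
    proof (cases "a \<in> P")
      case True
      have "count m (Old a) + n (csm a) = n (prd a)" using inv True unfolding Inv_def by blast
      then show ?thesis using Old all csmT[OF True] prdT[OF True] by simp
    next
      case False
      then have "x \<notin> pc_P P" using Old unfolding pc_P_def by auto
      then show ?thesis using inv Old unfolding Inv_def by simp
    qed
  next
    case PIn then show ?thesis using inv all iiT unfolding Inv_def by simp
  next
    case POut
    have h: "count m POut + c = k" using inv all ooT unfolding Inv_def by auto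
    show ?thesis using POut by (simp add: h[symmetric])
  qed
qed

lemma shift: "Inv k 0 (m' + repeat_mset k' {#POut#}) n \<Longrightarrow> Inv k k' m' n"
  unfolding Inv_def pc_P_def by auto

lemma sound:
  assumes "reach (pc_T T) (pc_F F {ii} {oo}) (repeat_mset k {#PIn#}) (m' + repeat_mset k' {#POut#})"
  shows "reach (pc_T T) (pc_F F {ii} {oo}) m' (repeat_mset (k - k') {#POut#})"
proof -
  obtain n where "Inv k 0 (m' + repeat_mset k' {#POut#}) n"
    using reach_inv[OF assms initial] by blast
  then have inv: "Inv k k' m' n" by (rule shift)
  obtain m2 n2 where "reach (pc_T T) (pc_F F {ii} {oo}) m' m2" "Inv k k' m2 n2" "\<forall>t\<in>T. n2 t = k"
    using finish[OF refl inv] by blast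
  then show ?thesis using final by blast
qed

end

theorem mainTheorem19:
  fixes P T :: "'a set" and F :: "('a \<times> 'a) set" and I Out :: "'a set"
  assumes "tand_net P T F I Out"
    and "card I = 1" and "card Out = 1"
  shows "sub_sound_t P T F I Out"
proof -
  obtain ii where I: "I = {ii}" using assms(2) card_1_singleton_iff by (metis One_nat_def)
  obtain oo where O: "Out = {oo}" using assms(3) card_1_singleton_iff by (metis One_nat_def)
  have tn: "and_net P T F I Out" "twf_net P T F I Out" using assms(1) unfolding tand_net_def by auto
  have pn: "finite P" "finite T" "P \<inter> T = {}" "F \<subseteq> P \<times> T \<union> T \<times> P"
    using tn(2) unfolding twf_net_def wf_net_def petri_net_def by auto
  have IT: "I \<subseteq> T" "Out \<subseteq> T" using tn(2) unfolding twf_net_def by auto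
  have rch: "\<forall>x\<in>T. (ii, x) \<in> F\<^sup>*" using tn(2) I unfolding twf_net_def wf_net_def by auto
  have ac: "acyclic F" using tn(1) unfolding and_net_def by auto
  have pre1: "\<forall>p\<in>P. card (preset F p) = 1" using tn(1) IT pn(3) unfolding and_net_def by blast
  have post1: "\<forall>p\<in>P. card (postset F p) = 1" using tn(1) IT pn(3) unfolding and_net_def by blast
  have pr: "\<forall>p\<in>P. \<exists>!u. (u,p) \<in> F"
  proof
    fix p assume "p \<in> P"
    then obtain u where "preset F p = {u}" using pre1 card_1_singleton_iff by (metis One_nat_def)
    then show "\<exists>!u. (u,p) \<in> F" unfolding preset_def by (metis mem_Collect_eq singletonD singletonI)
  qed
  have po: "\<forall>p\<in>P. \<exists>!u. (p,u) \<in> F"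
  proof
    fix p assume "p \<in> P"
    then obtain u where "postset F p = {u}" using post1 card_1_singleton_iff by (metis One_nat_def)
    then show "\<exists>!u. (p,u) \<in> F" unfolding postset_def by (metis mem_Collect_eq singletonD singletonI)
  qed
  interpret tand1 P T F ii oo
    using pn IT I O rch ac pr po by unfold_locales auto
  show ?thesis unfolding sub_sound_t_def sub_sound_p_def I O
    using sound by simp
qed

end
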